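(* Consider the multiobjective optimal control setting, Assumption A, Assumption B and Algorithm 1 described in the context, and let $x_0\in\mathbb{X}_N$. Then the MPC feedback $\mu^N:\mathbb{N}_0\times\mathbb{X}\to\mathbb{U}$ defined by Algorithm 1 has the infinite-horizon averaged closed-loop performance \[\bar J_i^\infty(x_0,\mu^N):=\limsup_{K\to\infty}\frac1K\sum_{k=0}^{K-1}\ell_i\big(x_\mu(k,x_0),\mu^N(k,x_\mu(k,x_0))\big)\le\ell_i(x^e,u^e)\] for all objectives $i\in\{2,\dots,s\}$.
   Context: Let $f:\mathbb{R}^n\times\mathbb{R}^m\to\mathbb{R}^n$ be continuous and consider $x(k+1)=f(x(k),u(k))$, $x(0)=x_0$; $x_{\mathbf{u}}(k,x_0)$ denotes the solution for control sequence $\mathbf u$. Let $\mathbb{X}\subseteq\mathbb{R}^n$, $\mathbb{U}\subseteq\mathbb{R}^m$, $\mathbb{X}_0\subseteq\mathbb{X}$ be nonempty; horizons $N\ge2$, objectives $s\ge2$. $\mathbb{U}^N(x_0)$ is the set of $\mathbf{u}\in\mathbb{U}^N$ with $x_{\mathbf{u}}(k,x_0)\in\mathbb{X}$ for $k=1,\dots,N-1$ and $x_{\mathbf{u}}(N,x_0)\in\mathbb{X}_0$; $\mathbb{X}_N=\{x_0\in\mathbb{X}:\mathbb{U}^N(x_0)\neq\emptyset\}$. With stage costs $\ell_i:\mathbb{X}\times\mathbb{U}\to\mathbb{R}$ ($i=1,\dots,s$) and continuous $F_1:\mathbb{X}_0\to\mathbb{R}_{\ge0}$: $J_1^N(x_0,\mathbf{u})=\sum_{k=0}^{N-1}\ell_1(x_{\mathbf{u}}(k,x_0),u(k))+F_1(x_{\mathbf{u}}(N,x_0))$,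 $J_i^N(x_0,\mathbf{u})=\sum_{k=0}^{N-1}\ell_i(x_{\mathbf{u}}(k,x_0),u(k))$ for $i\ge2$. $\mathbf{u}^\star\in\mathbb{U}^N(x_0)$ is efficient if no $\mathbf{u}\in\mathbb{U}^N(x_0)$ satisfies $J_i^N(x_0,\mathbf{u})\le J_i^N(x_0,\mathbf{u}^\star)$ for all $i$ with strict inequality for some $i$; $\mathbb{U}^N_{\mathcal P}(x_0)$ is the efficient set. $\mathcal{J}^N(x_0)$ is the set of vectors $(J_i^N(x_0,\mathbf u))_{i=1}^s$, $\mathbf u\in\mathbb{U}^N(x_0)$, $\mathcal{J}^N_{\mathcal P}(x_0)$ the subset for efficient $\mathbf u$; external stability means every $y\in\mathcal{J}^N(x_0)$ dominates componentwise some $y_{\mathcal P}\in\mathcal{J}^N_{\mathcal P}(x_0)$. $\mathcal K_\infty$: continuous strictly increasing unbounded functions $\mathbb{R}_{\ge0}\to\mathbb{R}_{\ge0}$ vanishing at $0$. Assumption A: (i) $(x^e,u^e)\in\mathbb{X}\times\mathbb{U}$ with $f(x^e,u^e)=x^e$; (ii) $\lambda_1:\mathbb{X}\to\mathbb{R}$ bounded below, $\lambda_1(x^e)=0$, $\alpha_{\ell,1}\in\mathcal K_\infty$ with $\ell_1(x,u)-\ell_1(x^e,u^e)+\lambda_1(x)-\lambda_1(f(x,u))\ge\alpha_{\ell,1}(\|x-x^e\|+\|u-u^e\|)$ on $\mathbb{X}\times\mathbb{U}$; (iii) all $\ell_i$ continuous; (iv) $x^e\in\mathbb{X}_0$ and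 $\kappa:\mathbb{X}_0\to\mathbb{U}$ with $f(x,\kappa(x))\in\mathbb{X}_0$ and $F_1(f(x,\kappa(x)))+\ell_1(x,\kappa(x))\le F_1(x)+\ell_1(x^e,u^e)$ for all $x\in\mathbb{X}_0$; (v) $\mathcal{J}^N_{\mathcal P}(x)$ externally stable for $\mathcal{J}^N(x)$ for all $x\in\mathbb{X}_N$. Assumption B: there are $\gamma_{F_1},\gamma_{\lambda_1}\in\mathcal K_\infty$ with (i) $F_1(x^e)=0$ and $|F_1(x)-F_1(x^e)|\le\gamma_{F_1}(\|x-x^e\|)$ for all $x\in\mathbb{X}_0$; (ii) $|\lambda_1(x)-\lambda_1(x^e)|\le\gamma_{\lambda_1}(\|x-x^e\|)$ for all $x\in\mathbb{X}$. Algorithm 1 ($k\in\mathbb N_0$): $x(0)=x_0$, choose any $\mathbf{u}^\star_{x(0)}\in\mathbb{U}^N_{\mathcal P}(x(0))$; for $k\ge1$ choose $\mathbf{u}^\star_{x(k)}\in\mathbb{U}^N_{\mathcal P}(x(k))$ with $J_1^N(x(k),\mathbf{u}^\star_{x(k)})\le J_1^N(x(k),\mathbf{u}_{x(k)})$, where $\mathbf{u}_{x(k+1)}:=(u^\star_{x(k)}(1),\dots,u^\star_{x(k)}(N-1),\kappa(x_{\mathbf{u}^\star_{x(k)}}(N,x(k))))$. Feedback $\mu^N(k,x(k)):=u^\star_{x(k)}(0)$, $x(k+1)=f(x(k),\mu^N(k,x(k)))$, $x_\mu(k,x_0):=x(k)$. The statement applies to any admissible choices of efficient solutions. *)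

theory Defs
  imports "HOL-Analysis.Analysis"
begin

definition Kinf :: "(real \<Rightarrow> real) \<Rightarrow> bool" where
  "Kinf \<alpha> \<longleftrightarrow> continuous_on {0..} \<alpha> \<and> strict_mono_on {0..} \<alpha> \<and> \<alpha> 0 = 0
     \<and> (\<forall>x\<ge>0. \<alpha> x \<ge> 0) \<and> (\<forall>M. \<exists>r\<ge>0. \<alpha> r > M)"

primrec traj :: "('x \<Rightarrow> 'u \<Rightarrow> 'x) \<Rightarrow> 'x \<Rightarrow> 'u list \<Rightarrow> nat \<Rightarrow> 'x" where
  "traj f x0 us 0 = x0"
| "traj f x0 us (Suc k) = f (traj f x0 us k) (us ! k)"

definition admissible ::
  "('x \<Rightarrow> 'u \<Rightarrow> 'x) \<Rightarrow> 'x set \<Rightarrow> 'u set \<Rightarrow> 'x set \<Rightarrow> nat \<Rightarrow> 'x \<Rightarrow> 'u list set" where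
  "admissible f X U X0 N x0 = {us. length us = N \<and> set us \<subseteq> U
      \<and> (\<forall>k\<in>{1..N-1}. traj f x0 us k \<in> X) \<and> traj f x0 us N \<in> X0}"

definition feasible_set ::
  "('x \<Rightarrow> 'u \<Rightarrow> 'x) \<Rightarrow> 'x set \<Rightarrow> 'u set \<Rightarrow> 'x set \<Rightarrow> nat \<Rightarrow> 'x set" where
  "feasible_set f X U X0 N = {x0 \<in> X. admissible f X U X0 N x0 \<noteq> {}}"

definition Jcost ::
  "('x \<Rightarrow> 'u \<Rightarrow> 'x) \<Rightarrow> (nat \<Rightarrow> 'x \<Rightarrow> 'u \<Rightarrow> real) \<Rightarrow> ('x \<Rightarrow> real) \<Rightarrow> nat \<Rightarrow> nat
     \<Rightarrow> 'x \<Rightarrow> 'u list \<Rightarrow> real" where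
  "Jcost f ell F1 N i x0 us = (\<Sum>k<N. ell i (traj f x0 us k) (us ! k))
      + (if i = 1 then F1 (traj f x0 us N) else 0)"

definition efficient ::
  "('x \<Rightarrow> 'u \<Rightarrow> 'x) \<Rightarrow> 'x set \<Rightarrow> 'u set \<Rightarrow> 'x set \<Rightarrow> (nat \<Rightarrow> 'x \<Rightarrow> 'u \<Rightarrow> real)
     \<Rightarrow> ('x \<Rightarrow> real) \<Rightarrow> nat \<Rightarrow> nat \<Rightarrow> 'x \<Rightarrow> 'u list set" where
  "efficient f X U X0 ell F1 s N x0 = {us \<in> admissible f X U X0 N x0.
      \<not> (\<exists>v \<in> admissible f X U X0 N x0.
           (\<forall>i\<in>{1..s}. Jcost f ell F1 N i x0 v \<le> Jcost f ell F1 N i x0 us)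
         \<and> (\<exists>i\<in>{1..s}. Jcost f ell F1 N i x0 v < Jcost f ell F1 N i x0 us))}"

definition externally_stable ::
  "('x \<Rightarrow> 'u \<Rightarrow> 'x) \<Rightarrow> 'x set \<Rightarrow> 'u set \<Rightarrow> 'x set \<Rightarrow> (nat \<Rightarrow> 'x \<Rightarrow> 'u \<Rightarrow> real)
     \<Rightarrow> ('x \<Rightarrow> real) \<Rightarrow> nat \<Rightarrow> nat \<Rightarrow> 'x \<Rightarrow> bool" where
  "externally_stable f X U X0 ell F1 s N x0 \<longleftrightarrow>
     (\<forall>us \<in> admissible f X U X0 N x0. \<exists>ue \<in> efficient f X U X0 ell F1 s N x0.
        \<forall>i\<in>{1..s}. Jcost f ell F1 N i x0 ue \<le> Jcost f ell F1 N i x0 us)"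

definition shifted_candidate ::
  "('x \<Rightarrow> 'u \<Rightarrow> 'x) \<Rightarrow> ('x \<Rightarrow> 'u) \<Rightarrow> nat \<Rightarrow> 'x \<Rightarrow> 'u list \<Rightarrow> 'u list" where
  "shifted_candidate f kappa N x us = tl us @ [kappa (traj f x us N)]"

end

theory Submission
  imports Defs
begin

lemma cesaro_real:
  fixes a :: "nat \<Rightarrow> real"
  assumes lim: "a \<longlonglongrightarrow> L"
  shows "(\<lambda>K. (1 / real K) * (\<Sum>k<K. a k)) \<longlonglongrightarrow> L"
proof (rule LIMSEQ_I)
  fix e :: real assume e: "0 < e"
  from LIMSEQ_D[OF lim, of "e/2"] e obtain M where M: "\<And>n. n \<ge> M \<Longrightarrow> norm (a n - L) < e/2" by auto
  define C where "C = (\<Sum>k<M. \<bar>a k - L\<bar>)"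
  have C0: "C \<ge> 0" unfolding C_def by (intro sum_nonneg) auto
  obtain K0 :: nat where K0: "real K0 > 2 * C / e" using reals_Archimedean2 by blast
  show "\<exists>no. \<forall>n\<ge>no. norm ((1 / real n) * (\<Sum>k<n. a k) - L) < e"
  proof (intro exI[of _ "max (Suc M) K0"] allI impI)
    fix n assume n: "max (Suc M) K0 \<le> n"
    then have nM: "M \<le> n" and npos: "real n > 0" and nK: "real n \<ge> real K0" by auto
    have eq: "(1 / real n) * (\<Sum>k<n. a k) - L = (1 / real n) * (\<Sum>k<n. a k - L)"
      using npos by (simp add: sum_subtractf field_simps)
    have split: "{..<n} = {..<M} \<union> {M..<n}" using nM by auto
    have "\<bar>\<Sum>k<n. a k - L\<bar> \<le> (\<Sum>k<n. \<bar>a k - L\<bar>)" by (rule sum_abs)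
    also have "\<dots> = C + (\<Sum>k\<in>{M..<n}. \<bar>a k - L\<bar>)"
      unfolding C_def split by (subst sum.union_disjoint) auto
    also have "(\<Sum>k\<in>{M..<n}. \<bar>a k - L\<bar>) \<le> (\<Sum>k\<in>{M..<n}. e/2)"
      by (intro sum_mono) (use M in \<open>fastforce intro: less_imp_le\<close>)
    also have "\<dots> \<le> real n * (e/2)" using e by simp
    finally have S: "\<bar>\<Sum>k<n. a k - L\<bar> \<le> C + real n * (e/2)" by simp
    have "C < real n * (e/2)"
    proof -
      have "2 * C / e < real n" using K0 nK by linarith
      then show ?thesis using e by (simp add: field_simps)
    qed
    then have "\<bar>\<Sum>k<n. a k - L\<bar> < real n * e" using S by linarith
    then have "(1 / real n) * \<bar>\<Sum>k<n. a k - L\<bar> < e" using npos by (simp add: field_simps)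
    then show "norm ((1 / real n) * (\<Sum>k<n. a k) - L) < e"
      unfolding eq using npos by (simp add: abs_mult)
  qed
qed

lemma Kinf_tendsto_zero:
  assumes K: "Kinf \<alpha>" and r0: "\<And>k. r k \<ge> 0" and lim: "(\<lambda>k. \<alpha> (r k)) \<longlonglongrightarrow> 0"
  shows "r \<longlonglongrightarrow> 0"
proof (rule LIMSEQ_I)
  fix e :: real assume e: "0 < e"
  have sm: "strict_mono_on {0..} \<alpha>" and a0: "\<alpha> 0 = 0" using K unfolding Kinf_def by auto
  have ae: "\<alpha> e > 0" using strict_mono_onD[OF sm, of 0 e] e a0 by auto
  from LIMSEQ_D[OF lim ae] obtain M where M: "\<And>n. n \<ge> M \<Longrightarrow> norm (\<alpha> (r n) - 0) < \<alpha> e" by auto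
  show "\<exists>no. \<forall>n\<ge>no. norm (r n - 0) < e"
  proof (intro exI[of _ M] allI impI)
    fix n assume "M \<le> n"
    then have A: "\<alpha> (r n) < \<alpha> e" using M[of n] by (simp add: abs_less_iff)
    have "r n < e"
    proof (rule ccontr)
      assume "\<not> r n < e"
      then have "e \<le> r n" by simp
      then have "\<alpha> e \<le> \<alpha> (r n)" using strict_mono_on_leD[OF sm] e by auto
      then show False using A by simp
    qed
    then show "norm (r n - 0) < e" using r0[of n] by simp
  qed
qed

lemma traj_shift:
  assumes "length us = Suc M" "j \<le> M"
  shows "traj f (f x (us!0)) (tl us @ [v]) j = traj f x us (Suc j)"
  using assms(2)
proof (induction j)
  case 0 then show ?case by simp
next
  case (Suc j)
  have "(tl us @ [v]) ! j = us ! Suc j" using Suc.prems assms(1)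
    by (cases us) (auto simp: nth_append)
  then show ?case using Suc by simp
qed

lemma traj_shift_end:
  assumes "length us = Suc M"
  shows "traj f (f x (us!0)) (tl us @ [v]) (Suc M) = f (traj f x us (Suc M)) v"
proof -
  have "(tl us @ [v]) ! M = v" using assms by (cases us) (auto simp: nth_append)
  then show ?thesis using traj_shift[OF assms, of M f x v] by simp
qed

lemma cand_sum:
  assumes "length us = Suc M"
  shows "(\<Sum>j<Suc M. g (traj f (f x (us!0)) (tl us @ [v]) j) ((tl us @ [v]) ! j))
     = (\<Sum>j<M. g (traj f x us (Suc j)) (us ! Suc j)) + g (traj f x us (Suc M)) v"
proof -
  have "(\<Sum>j<M. g (traj f (f x (us!0)) (tl us @ [v]) j) ((tl us @ [v]) ! j))
      = (\<Sum>j<M. g (traj f x us (Suc j)) (us ! Suc j))"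
  proof (rule sum.cong)
    fix j assume "j \<in> {..<M}"
    then have j: "j < M" by simp
    have "(tl us @ [v]) ! j = us ! Suc j" using j assms by (cases us) (auto simp: nth_append)
    then show "g (traj f (f x (us!0)) (tl us @ [v]) j) ((tl us @ [v]) ! j) = g (traj f x us (Suc j)) (us ! Suc j)"
      using traj_shift[OF assms, of j f x v] j by simp
  qed simp
  moreover have "(tl us @ [v]) ! M = v" using assms by (cases us) (auto simp: nth_append)
  moreover have "traj f (f x (us!0)) (tl us @ [v]) M = traj f x us (Suc M)"
    using traj_shift[OF assms, of M] by simp
  ultimately show ?thesis by simp
qed

theorem theorem4p8:
  fixes f :: "real^'n \<Rightarrow> real^'m \<Rightarrow> real^'n"
    and X X0 :: "(real^'n) set" and U :: "(real^'m) set"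
    and N s :: nat
    and ell :: "nat \<Rightarrow> real^'n \<Rightarrow> real^'m \<Rightarrow> real"
    and F1 lam1 :: "real^'n \<Rightarrow> real"
    and xe :: "real^'n" and ue :: "real^'m"
    and alpha1 gamF gamL :: "real \<Rightarrow> real"
    and kappa :: "real^'n \<Rightarrow> real^'m"
    and x0 :: "real^'n"
    and xs :: "nat \<Rightarrow> real^'n"
    and useq :: "nat \<Rightarrow> (real^'m) list"
  assumes f_cont: "continuous_on UNIV (\<lambda>(x, u). f x u)"
    and X_ne: "X \<noteq> {}" and U_ne: "U \<noteq> {}" and X0_ne: "X0 \<noteq> {}" and X0_sub: "X0 \<subseteq> X"
    and N_ge: "N \<ge> 2" and s_ge: "s \<ge> 2"
    and F1_cont: "continuous_on X0 F1" and F1_nonneg: "\<forall>x\<in>X0. F1 x \<ge> 0"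
    \<comment> \<open>Assumption A\<close>
    and A1: "xe \<in> X" "ue \<in> U" "f xe ue = xe"
    and A2: "\<exists>c. \<forall>x\<in>X. c \<le> lam1 x" "lam1 xe = 0" "Kinf alpha1"
      "\<forall>x\<in>X. \<forall>u\<in>U. ell 1 x u - ell 1 xe ue + lam1 x - lam1 (f x u) \<ge> alpha1 (norm (x - xe) + norm (u - ue))"
    and A3: "\<forall>i\<in>{1..s}. continuous_on (X \<times> U) (\<lambda>(x, u). ell i x u)"
    and A4: "xe \<in> X0"
      "\<forall>x\<in>X0. kappa x \<in> U \<and> f x (kappa x) \<in> X0
         \<and> F1 (f x (kappa x)) + ell 1 x (kappa x) \<le> F1 x + ell 1 xe ue"
    and A5: "\<forall>x\<in>feasible_set f X U X0 N. externally_stable f X U X0 ell F1 s N x"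
    \<comment> \<open>Assumption B\<close>
    and B: "Kinf gamF" "Kinf gamL" "F1 xe = 0"
      "\<forall>x\<in>X0. \<bar>F1 x - F1 xe\<bar> \<le> gamF (norm (x - xe))"
      "\<forall>x\<in>X. \<bar>lam1 x - lam1 xe\<bar> \<le> gamL (norm (x - xe))"
    \<comment> \<open>initial state\<close>
    and x0: "x0 \<in> feasible_set f X U X0 N"
    \<comment> \<open>any run of Algorithm 1\<close>
    and alg_init: "xs 0 = x0"
    and alg_eff: "\<forall>k. useq k \<in> efficient f X U X0 ell F1 s N (xs k)"
    and alg_cand: "\<forall>k. Jcost f ell F1 N 1 (xs (Suc k)) (useq (Suc k))
        \<le> Jcost f ell F1 N 1 (xs (Suc k)) (shifted_candidate f kappa N (xs k) (useq k))"
    and alg_step: "\<forall>k. xs (Suc k) = f (xs k) (hd (useq k))"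
  shows "\<forall>i\<in>{2..s}.
    limsup (\<lambda>K. ereal ((1 / real K) * (\<Sum>k<K. ell i (xs k) (hd (useq k)))))
      \<le> ereal (ell i xe ue)"
proof
  fix i assume i: "i \<in> {2..s}"
  obtain c where c: "\<forall>x\<in>X. c \<le> lam1 x" using A2(1) by blast
  define M where "M = N - 1"
  have NM: "N = Suc M" using N_ge unfolding M_def by simp
  have a1nn: "\<And>t. t \<ge> 0 \<Longrightarrow> alpha1 t \<ge> 0" using A2(3) unfolding Kinf_def by auto
  have adm: "\<And>k. useq k \<in> admissible f X U X0 N (xs k)"
    using alg_eff unfolding efficient_def by blast
  have len: "\<And>k. length (useq k) = N" and setU: "\<And>k. set (useq k) \<subseteq> U"
    and trX: "\<And>k j. j \<in> {1..N-1} \<Longrightarrow> traj f (xs k) (useq k) j \<in> X"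
    and trN: "\<And>k. traj f (xs k) (useq k) N \<in> X0"
    using adm unfolding admissible_def by auto
  have ne: "\<And>k. useq k \<noteq> []" using len N_ge by (metis list.size(3) not_numeral_le_zero)
  have hd: "\<And>k. hd (useq k) = useq k ! 0" using ne by (simp add: hd_conv_nth)
  have nthU: "\<And>k j. j < N \<Longrightarrow> useq k ! j \<in> U" using setU len by (metis nth_mem subsetD)
  have muU: "\<And>k. hd (useq k) \<in> U" using nthU[of 0] hd N_ge by simp
  have step: "\<And>k. xs (Suc k) = traj f (xs k) (useq k) 1" using alg_step hd by simp
  have xsX: "\<And>k. xs k \<in> X"
  proof -
    fix k show "xs k \<in> X"
    proof (cases k)
      case 0 then show ?thesis using x0 alg_init unfolding feasible_set_def by simp
    next
      case (Suc k') then show ?thesis using step[of k'] trX[of 1 k'] N_ge by simp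
    qed
  qed
  have trX': "\<And>k j. j < N \<Longrightarrow> traj f (xs k) (useq k) j \<in> X"
  proof -
    fix k j assume j: "j < N"
    show "traj f (xs k) (useq k) j \<in> X"
    proof (cases j)
      case 0 then show ?thesis using xsX by simp
    next
      case (Suc j') then show ?thesis using trX[of j k] j by simp
    qed
  qed
  have shiftN: "(\<Sum>j<N. g j) = g 0 + (\<Sum>j<M. g (Suc j))" for g :: "nat \<Rightarrow> real"
    unfolding NM by (rule sum.lessThan_Suc_shift)
  define V where "V k = Jcost f ell F1 N 1 (xs k) (useq k)" for k
  have Vdef: "V k = (\<Sum>j<N. ell 1 (traj f (xs k) (useq k) j) (useq k ! j)) + F1 (traj f (xs k) (useq k) N)" for k
    unfolding V_def Jcost_def by simp
  have dec: "V (Suc k) \<le> V k - ell 1 (xs k) (hd (useq k)) + ell 1 xe ue" for k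
  proof -
    let ?u = "useq k" and ?x = "xs k"
    let ?v = "kappa (traj f ?x ?u N)"
    have lenM: "length ?u = Suc M" using len NM by simp
    have xs1: "xs (Suc k) = f ?x (?u ! 0)" using alg_step hd by simp
    have "V (Suc k) \<le> Jcost f ell F1 N 1 (xs (Suc k)) (tl ?u @ [?v])"
      using alg_cand unfolding V_def shifted_candidate_def by simp
    also have "\<dots> = (\<Sum>j<M. ell 1 (traj f ?x ?u (Suc j)) (?u ! Suc j)) + ell 1 (traj f ?x ?u N) ?v
        + F1 (f (traj f ?x ?u N) ?v)"
      unfolding Jcost_def xs1 using cand_sum[OF lenM, of "ell 1" f ?x ?v, unfolded NM[symmetric]]
        traj_shift_end[OF lenM, of f ?x ?v, unfolded NM[symmetric]]
      by simp
    also have "\<dots> \<le> (\<Sum>j<M. ell 1 (traj f ?x ?u (Suc j)) (?u ! Suc j)) + F1 (traj f ?x ?u N) + ell 1 xe ue"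
      using A4(2) trN[of k] by force
    also have "\<dots> = V k - ell 1 (xs k) (hd (useq k)) + ell 1 xe ue"
      unfolding Vdef shiftN[of "\<lambda>j. ell 1 (traj f ?x ?u j) (?u ! j)"] using hd by simp
    finally show ?thesis .
  qed
  define W where "W k = V k + lam1 (xs k)" for k
  define r where "r k = norm (xs k - xe) + norm (hd (useq k) - ue)" for k
  have r0: "r k \<ge> 0" for k unfolding r_def by simp
  have Wdec: "W (Suc k) \<le> W k - alpha1 (r k)" for k
  proof -
    have "alpha1 (r k) \<le> ell 1 (xs k) (hd (useq k)) - ell 1 xe ue + lam1 (xs k) - lam1 (xs (Suc k))"
      using A2(4) xsX[of k] muU[of k] alg_step unfolding r_def by simp
    then show ?thesis using dec[of k] unfolding W_def by simp
  qed
  have Wlow: "W k \<ge> real N * ell 1 xe ue + c" for k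
  proof -
    let ?u = "useq k" and ?x = "xs k"
    have "(\<Sum>j<N. ell 1 xe ue + (lam1 (traj f ?x ?u (Suc j)) - lam1 (traj f ?x ?u j)))
        \<le> (\<Sum>j<N. ell 1 (traj f ?x ?u j) (?u ! j))"
    proof (rule sum_mono)
      fix j assume "j \<in> {..<N}"
      then have j: "j < N" by simp
      have "alpha1 (norm (traj f ?x ?u j - xe) + norm (?u ! j - ue)) \<le>
          ell 1 (traj f ?x ?u j) (?u ! j) - ell 1 xe ue + lam1 (traj f ?x ?u j) - lam1 (f (traj f ?x ?u j) (?u ! j))"
        using A2(4) trX'[OF j] nthU[OF j] by blast
      moreover have "alpha1 (norm (traj f ?x ?u j - xe) + norm (?u ! j - ue)) \<ge> 0" by (intro a1nn) simp
      ultimately show "ell 1 xe ue + (lam1 (traj f ?x ?u (Suc j)) - lam1 (traj f ?x ?u j)) \<le> ell 1 (traj f ?x ?u j) (?u ! j)"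
        by simp
    qed
    moreover have "(\<Sum>j<N. ell 1 xe ue + (lam1 (traj f ?x ?u (Suc j)) - lam1 (traj f ?x ?u j)))
        = real N * ell 1 xe ue + lam1 (traj f ?x ?u N) - lam1 ?x"
      using sum_lessThan_telescope[of "\<lambda>j. lam1 (traj f ?x ?u j)" N]
      by (simp only: sum.distrib sum_constant) simp
    moreover have "lam1 (traj f ?x ?u N) \<ge> c" using c trN[of k] X0_sub by blast
    moreover have "F1 (traj f ?x ?u N) \<ge> 0" using F1_nonneg trN[of k] by blast
    ultimately show ?thesis unfolding W_def Vdef by simp
  qed
  have psum: "(\<Sum>k<K. alpha1 (r k)) \<le> W 0 - W K" for K
  proof (induction K)
    case 0 then show ?case by simp
  next
    case (Suc K) then show ?case using Wdec[of K] by simp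
  qed
  have "summable (\<lambda>k. alpha1 (r k))"
  proof (rule summableI_nonneg_bounded)
    show "\<And>k. 0 \<le> alpha1 (r k)" using a1nn r0 by blast
    show "\<And>K. (\<Sum>k<K. alpha1 (r k)) \<le> W 0 - (real N * ell 1 xe ue + c)"
      using psum Wlow by (smt (verit))
  qed
  then have "(\<lambda>k. alpha1 (r k)) \<longlonglongrightarrow> 0" by (rule summable_LIMSEQ_zero)
  then have rlim: "r \<longlonglongrightarrow> 0" by (rule Kinf_tendsto_zero[OF A2(3) r0])
  have "(\<lambda>k. norm (xs k - xe)) \<longlonglongrightarrow> 0"
    by (rule tendsto_sandwich[OF _ _ tendsto_const rlim]) (auto simp: r_def)
  then have xlim: "xs \<longlonglongrightarrow> xe"
    using tendsto_norm_zero_iff LIM_zero_iff by blast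
  have "(\<lambda>k. norm (hd (useq k) - ue)) \<longlonglongrightarrow> 0"
    by (rule tendsto_sandwich[OF _ _ tendsto_const rlim]) (auto simp: r_def)
  then have ulim: "(\<lambda>k. hd (useq k)) \<longlonglongrightarrow> ue"
    using tendsto_norm_zero_iff LIM_zero_iff by blast
  have plim: "(\<lambda>k. (xs k, hd (useq k))) \<longlonglongrightarrow> (xe, ue)"
    by (rule tendsto_Pair[OF xlim ulim])
  have i1: "i \<in> {1..s}" using i by simp
  have "(\<lambda>k. (\<lambda>(x, u). ell i x u) (xs k, hd (useq k))) \<longlonglongrightarrow> (\<lambda>(x, u). ell i x u) (xe, ue)"
    by (rule continuous_on_tendsto_compose[OF A3[rule_format, OF i1] plim])
       (use A1 xsX muU in auto)
  then have "(\<lambda>k. ell i (xs k) (hd (useq k))) \<longlonglongrightarrow> ell i xe ue" by simp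
  then have "(\<lambda>K. (1 / real K) * (\<Sum>k<K. ell i (xs k) (hd (useq k)))) \<longlonglongrightarrow> ell i xe ue"
    by (rule cesaro_real)
  then have "(\<lambda>K. ereal ((1 / real K) * (\<Sum>k<K. ell i (xs k) (hd (useq k))))) \<longlonglongrightarrow> ereal (ell i xe ue)"
    by (rule tendsto_ereal)
  then have "limsup (\<lambda>K. ereal ((1 / real K) * (\<Sum>k<K. ell i (xs k) (hd (useq k))))) = ereal (ell i xe ue)"
    by (intro lim_imp_Limsup) simp_all
  then show "limsup (\<lambda>K. ereal ((1 / real K) * (\<Sum>k<K. ell i (xs k) (hd (useq k)))))
      \<le> ereal (ell i xe ue)" by simp
qed

end
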